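(* Fix parameters $\mathfrak h=(h,\varepsilon,\theta)$ for which condition (M.1) holds. Let $w_h,v_h\in\mathbb V_h$ satisfy $$-\Delta^\diamond_{\infty,\mathfrak h}w_h(z)\le-\Delta^\diamond_{\infty,\mathfrak h}v_h(z)\qquad\forall z\in\mathcal N_h^I,$$ and assume that either $-\Delta^\diamond_{\infty,\mathfrak h}w_h(z)\le0$ for every $z\in\mathcal N_h^I$, or $-\Delta^\diamond_{\infty,\mathfrak h}v_h(z)\ge0$ for every $z\in\mathcal N_h^I$. Then $$\max_{z\in\mathcal N_h}\big[w_h(z)-v_h(z)\big]=\max_{z\in\mathcal N_h^b}\big[w_h(z)-v_h(z)\big].$$
   Context: Setting: $\Omega\subset\mathbb R^d$ ($d\ge1$) is a bounded domain with continuous boundary. For $r>0$, $\Omega^{(r)}=\{x\in\Omega:\operatorname{dist}(x,\partial\Omega)>r\}$. $\mathcal T_h$ is a mesh of closed simplices, $h=\max_T\operatorname{diam}T$, $\Omega_h$ the interior of the union of the simplices, with $\Omega^{(h)}\subset\Omega_h\subset\Omega$; $\mathcal N_h$ is the set of vertices. $\mathbb V_h$ is the space of continuous piecewise linear functions on $\mathcal T_h$ with hat basis $\{\hat\varphi_z\}_{z\in\mathcal N_h}$ ($\hat\varphi_z(z')=\delta_{zz'}$), and $\mathcal I_h$ is the Lagrange interpolant. Parameters $\mathfrak h=(h,\varepsilon,\theta)$ with $\varepsilon\in[h,\operatorname{diam}\Omega]$, $0<\theta\le1$. Interior nodes $\mathcal N_h^I=\mathcal N_h\cap\Omega^{(2\varepsilon)}$;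 boundary nodes $\mathcal N_h^b=\mathcal N_h\setminus\mathcal N_h^I$. $\mathbb S_\theta$ is a finite symmetric subset of the unit sphere $\mathbb S$ such that each $v\in\mathbb S$ has $v_\theta\in\mathbb S_\theta$ with $|v-v_\theta|\le\theta$. For $z\in\mathcal N_h^I$, $\mathcal N_{\mathfrak h}(z)=\{z\}\cup\{z+\varepsilon v_\theta:v_\theta\in\mathbb S_\theta\}$, $S^+_{\mathfrak h}w(z)=\varepsilon^{-1}(\max_{x\in\mathcal N_{\mathfrak h}(z)}w(x)-w(z))$, $S^-_{\mathfrak h}w(z)=\varepsilon^{-1}(w(z)-\min_{x\in\mathcal N_{\mathfrak h}(z)}w(x))$, and $-\Delta^\diamond_{\infty,\mathfrak h}w(z)=-\varepsilon^{-1}(S^+_{\mathfrak h}\mathcal I_hw(z)-S^-_{\mathfrak h}\mathcal I_hw(z))$. Also $\widetilde{\mathcal N}_{\mathfrak h}(z)=\{z\}\cup\{z'\in\mathcal N_h:\exists v_\theta\in\mathbb S_\theta,\ \hat\varphi_{z'}(z+\varepsilon v_\theta)>0\}$. Condition (M.1): for every nonempty $S\subset\mathcal N_h^I$ there exist $z\in S$ and $z'\in\mathcal N_h\setminus S$ with $z'\in\widetilde{\mathcal N}_{\mathfrak h}(z)$. *)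

theory Defs
  imports "HOL-Analysis.Analysis"
begin

text \<open>Domain with continuous boundary: locally, after choosing a unit direction nu,
  the domain is the subgraph of a continuous function of the coordinates
  orthogonal to nu.\<close>
definition continuous_boundary :: "'a::euclidean_space set \<Rightarrow> bool" where
  "continuous_boundary \<Omega> \<longleftrightarrow>
     (\<forall>x\<in>frontier \<Omega>. \<exists>U nu g. open U \<and> x \<in> U \<and> norm nu = 1 \<and>
        continuous_on UNIV (g :: 'a \<Rightarrow> real) \<and>
        (\<forall>y. g y = g (y - (y \<bullet> nu) *\<^sub>R nu)) \<and>
        \<Omega> \<inter> U = {y\<in>U. y \<bullet> nu < g y})"

definition bounded_domain_cb :: "'a::euclidean_space set \<Rightarrow> bool" where
  "bounded_domain_cb \<Omega> \<longleftrightarrow> open \<Omega> \<and> connected \<Omega> \<and> \<Omega> \<noteq> {} \<and> bounded \<Omega>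
      \<and> continuous_boundary \<Omega>"

definition inner_set :: "'a::euclidean_space set \<Rightarrow> real \<Rightarrow> 'a set" where
  "inner_set \<Omega> r = {x\<in>\<Omega>. infdist x (frontier \<Omega>) > r}"

definition meshsize :: "'a::euclidean_space set set \<Rightarrow> real" where
  "meshsize Th = Max (diameter ` Th)"

definition mesh_domain :: "'a::euclidean_space set set \<Rightarrow> 'a set" where
  "mesh_domain Th = interior (\<Union>Th)"

definition nodes :: "'a::euclidean_space set set \<Rightarrow> 'a set" where
  "nodes Th = (\<Union>T\<in>Th. {x. x extreme_point_of T})"

definition is_mesh :: "'a::euclidean_space set \<Rightarrow> 'a set set \<Rightarrow> bool" where
  "is_mesh \<Omega> Th \<longleftrightarrow> finite Th \<and> Th \<noteq> {} \<and>
     (\<forall>T\<in>Th. (int DIM('a)) simplex T) \<and>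
     (\<forall>T\<in>Th. \<forall>T'\<in>Th. (T \<inter> T') face_of T \<and> (T \<inter> T') face_of T') \<and>
     inner_set \<Omega> (meshsize Th) \<subseteq> mesh_domain Th \<and> mesh_domain Th \<subseteq> \<Omega>"

text \<open>Continuous piecewise linear functions (space V_h); only values on the mesh matter.\<close>
definition Vh :: "'a::euclidean_space set set \<Rightarrow> ('a \<Rightarrow> real) set" where
  "Vh Th = {f. \<forall>T\<in>Th. \<exists>a b. \<forall>x\<in>T. f x = a \<bullet> x + b}"

definition hat :: "'a::euclidean_space set set \<Rightarrow> 'a \<Rightarrow> 'a \<Rightarrow> real" where
  "hat Th z = (THE f. f \<in> Vh Th \<and>
       (\<forall>z'\<in>nodes Th. f z' = (if z' = z then 1 else 0)) \<and>
       (\<forall>x. x \<notin> \<Union>Th \<longrightarrow> f x = 0))"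

definition interp :: "'a::euclidean_space set set \<Rightarrow> ('a \<Rightarrow> real) \<Rightarrow> 'a \<Rightarrow> real" where
  "interp Th w x = (\<Sum>z\<in>nodes Th. w z * hat Th z x)"

definition sphere_net :: "real \<Rightarrow> 'a::euclidean_space set \<Rightarrow> bool" where
  "sphere_net \<theta> S \<longleftrightarrow> finite S \<and> S \<subseteq> sphere 0 1 \<and> (\<forall>v\<in>S. - v \<in> S) \<and>
     (\<forall>v. norm v = 1 \<longrightarrow> (\<exists>v\<theta>\<in>S. norm (v - v\<theta>) \<le> \<theta>))"

definition int_nodes :: "'a::euclidean_space set \<Rightarrow> 'a set set \<Rightarrow> real \<Rightarrow> 'a set" where
  "int_nodes \<Omega> Th \<epsilon> = nodes Th \<inter> inner_set \<Omega> (2 * \<epsilon>)"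

definition bd_nodes :: "'a::euclidean_space set \<Rightarrow> 'a set set \<Rightarrow> real \<Rightarrow> 'a set" where
  "bd_nodes \<Omega> Th \<epsilon> = nodes Th - int_nodes \<Omega> Th \<epsilon>"

definition stencil :: "real \<Rightarrow> 'a::euclidean_space set \<Rightarrow> 'a \<Rightarrow> 'a set" where
  "stencil \<epsilon> S z = insert z ((\<lambda>v. z + \<epsilon> *\<^sub>R v) ` S)"

definition Splus :: "real \<Rightarrow> 'a::euclidean_space set \<Rightarrow> ('a \<Rightarrow> real) \<Rightarrow> 'a \<Rightarrow> real" where
  "Splus \<epsilon> S w z = (Max (w ` stencil \<epsilon> S z) - w z) / \<epsilon>"

definition Sminus :: "real \<Rightarrow> 'a::euclidean_space set \<Rightarrow> ('a \<Rightarrow> real) \<Rightarrow> 'a \<Rightarrow> real" where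
  "Sminus \<epsilon> S w z = (w z - Min (w ` stencil \<epsilon> S z)) / \<epsilon>"

definition neg_inf_lap ::
  "'a::euclidean_space set set \<Rightarrow> real \<Rightarrow> 'a set \<Rightarrow> ('a \<Rightarrow> real) \<Rightarrow> 'a \<Rightarrow> real" where
  "neg_inf_lap Th \<epsilon> S w z =
     - (Splus \<epsilon> S (interp Th w) z - Sminus \<epsilon> S (interp Th w) z) / \<epsilon>"

definition tilde_stencil :: "'a::euclidean_space set set \<Rightarrow> real \<Rightarrow> 'a set \<Rightarrow> 'a \<Rightarrow> 'a set" where
  "tilde_stencil Th \<epsilon> S z =
     insert z {z'\<in>nodes Th. \<exists>v\<in>S. hat Th z' (z + \<epsilon> *\<^sub>R v) > 0}"

definition condition_M1 :: "'a::euclidean_space set \<Rightarrow> 'a set set \<Rightarrow> real \<Rightarrow> 'a set \<Rightarrow> bool" where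
  "condition_M1 \<Omega> Th \<epsilon> S \<longleftrightarrow>
     (\<forall>A. A \<subseteq> int_nodes \<Omega> Th \<epsilon> \<longrightarrow> A \<noteq> {} \<longrightarrow>
        (\<exists>z\<in>A. \<exists>z'\<in>nodes Th - A. z' \<in> tilde_stencil Th \<epsilon> S z))"

end

theory Submission
  imports Defs
begin


lemma linear_real_inner:
  fixes g :: "'a::euclidean_space \<Rightarrow> real"
  assumes "linear g"
  shows "g x = (\<Sum>i\<in>Basis. g i *\<^sub>R i) \<bullet> x"
proof -
  have "g x = g (\<Sum>i\<in>Basis. (x \<bullet> i) *\<^sub>R i)" by (subst euclidean_representation) (rule refl)
  also have "\<dots> = (\<Sum>i\<in>Basis. g ((x \<bullet> i) *\<^sub>R i))"
    by (rule linear_sum[OF assms])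
  also have "\<dots> = (\<Sum>i\<in>Basis. (x \<bullet> i) * g i)"
    using linear_scale[OF assms] by simp
  also have "\<dots> = (\<Sum>i\<in>Basis. g i *\<^sub>R i) \<bullet> x"
    unfolding inner_sum_left inner_scaleR_left
  proof (rule sum.cong[OF refl])
    fix i :: 'a
    have "x \<bullet> i = i \<bullet> x" by (rule inner_commute)
    then show "(x \<bullet> i) * g i = g i * (i \<bullet> x)" by simp
  qed
  finally show ?thesis .
qed

lemma affine_interp_exists:
  fixes C :: "'a::euclidean_space set"
  assumes "\<not> affine_dependent C"
  shows "\<exists>a b. \<forall>p\<in>C. a \<bullet> p + b = phi p"
proof (cases "C = {}")
  case True then show ?thesis by auto
next
  case False
  then obtain c0 where c0: "c0 \<in> C" by auto
  define C' where "C' = C - {c0}"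
  have C: "C = insert c0 C'" "c0 \<notin> C'" using c0 C'_def by auto
  have ind: "independent ((\<lambda>x. -c0 + x) ` C')"
    using assms affine_dependent_iff_dependent[OF C(2)] C(1) by metis
  obtain g where g: "linear g" "\<forall>y\<in>(\<lambda>x. -c0 + x) ` C'. g y = phi (y + c0) - phi c0"
    using real_vector.linear_independent_extend[OF ind, of "\<lambda>y. phi (y + c0) - phi c0"] by blast
  define a where "a = (\<Sum>i\<in>Basis. g i *\<^sub>R i)"
  have ga: "g x = a \<bullet> x" for x unfolding a_def by (rule linear_real_inner[OF g(1)])
  show ?thesis
  proof (intro exI ballI)
    fix p assume "p \<in> C"
    show "a \<bullet> p + (phi c0 - a \<bullet> c0) = phi p"
    proof (cases "p = c0")
      case True then show ?thesis by simp
    next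
      case False
      then have "p \<in> C'" using \<open>p \<in> C\<close> C by auto
      then have "-c0 + p \<in> (\<lambda>x. -c0 + x) ` C'" by (rule imageI)
      then have "g (-c0 + p) = phi (-c0 + p + c0) - phi c0" using g(2) by blast
      then have "g (-c0 + p) = phi p - phi c0" by simp
      then show ?thesis using ga[of "-c0+p"] by (simp add: inner_diff_right algebra_simps)
    qed
  qed
qed

lemma affcomb:
  fixes P :: "'a::euclidean_space set"
  assumes "finite P" "sum u P = 1" "x = (\<Sum>p\<in>P. u p *\<^sub>R p)"
  shows "a \<bullet> x + b = (\<Sum>p\<in>P. u p * (a \<bullet> p + b))"
proof -
  have "(\<Sum>p\<in>P. u p * (a \<bullet> p + b)) = (\<Sum>p\<in>P. u p * (a \<bullet> p)) + (\<Sum>p\<in>P. u p) * b"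
    by (simp add: distrib_left sum.distrib sum_distrib_right)
  also have "\<dots> = a \<bullet> x + b" using assms by (simp add: inner_sum_right)
  finally show ?thesis by simp
qed

abbreviation ext :: "'a::euclidean_space set \<Rightarrow> 'a set" where
  "ext T \<equiv> {x. x extreme_point_of T}"

lemma simplex_ext:
  fixes T :: "'a::euclidean_space set"
  assumes "n simplex T"
  shows "finite (ext T) \<and> \<not> affine_dependent (ext T) \<and> T = convex hull (ext T)
     \<and> compact T \<and> convex T"
proof -
  obtain C where C: "\<not> affine_dependent C" "T = convex hull C"
    using assms unfolding simplex_def by blast
  have "ext T = C" using extreme_point_of_convex_hull_affine_independent[OF C(1)] C(2) by auto
  moreover have "finite C" using C(1) aff_independent_finite by blast
  ultimately show ?thesis using C finite_imp_compact_convex_hull convex_convex_hull by auto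
qed

lemma mesh_ext:
  assumes "is_mesh \<Omega> Th" "T \<in> Th"
  shows "finite (ext T) \<and> \<not> affine_dependent (ext T) \<and> T = convex hull (ext T)
     \<and> compact T \<and> convex T"
  using assms simplex_ext unfolding is_mesh_def by blast

lemma mesh_nodes_finite:
  assumes "is_mesh \<Omega> Th"
  shows "finite (nodes Th)"
  using assms mesh_ext[OF assms] unfolding nodes_def is_mesh_def by auto

lemma ext_nodes: "T \<in> Th \<Longrightarrow> p extreme_point_of T \<Longrightarrow> p \<in> nodes Th"
  unfolding nodes_def by auto

lemma in_hull_ext:
  assumes "is_mesh \<Omega> Th" "T \<in> Th" "x \<in> T"
  obtains u where "\<forall>p\<in>ext T. 0 \<le> u p" "sum u (ext T) = 1" "x = (\<Sum>p\<in>ext T. u p *\<^sub>R p)"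
proof -
  have f: "finite (ext T)" and h: "T = convex hull (ext T)" using mesh_ext[OF assms(1,2)] by auto
  then have "x \<in> convex hull (ext T)" using assms(3) by simp
  then show ?thesis using that convex_hull_finite[OF f] by auto
qed

lemma Vh_on_T:
  assumes "is_mesh \<Omega> Th" "f \<in> Vh Th" "T \<in> Th" "x \<in> T"
    "\<forall>p\<in>ext T. 0 \<le> u p" "sum u (ext T) = 1" "x = (\<Sum>p\<in>ext T. u p *\<^sub>R p)"
  shows "f x = (\<Sum>p\<in>ext T. u p * f p)"
proof -
  obtain a b where ab: "\<forall>y\<in>T. f y = a \<bullet> y + b" using assms(2,3) unfolding Vh_def by blast
  have f: "finite (ext T)" using mesh_ext[OF assms(1,3)] by auto
  have "f x = a \<bullet> x + b" using ab assms(4) by simp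
  also have "\<dots> = (\<Sum>p\<in>ext T. u p * (a \<bullet> p + b))" using affcomb[OF f assms(6,7)] .
  also have "\<dots> = (\<Sum>p\<in>ext T. u p * f p)"
    using ab by (intro sum.cong) (auto simp: extreme_point_of_def)
  finally show ?thesis .
qed

definition hatP :: "'a::euclidean_space set set \<Rightarrow> 'a \<Rightarrow> ('a \<Rightarrow> real) \<Rightarrow> bool" where
  "hatP Th z f \<longleftrightarrow> f \<in> Vh Th \<and>
       (\<forall>z'\<in>nodes Th. f z' = (if z' = z then 1 else 0)) \<and>
       (\<forall>x. x \<notin> \<Union>Th \<longrightarrow> f x = 0)"

lemma hat_unique:
  assumes "is_mesh \<Omega> Th" "hatP Th z f" "hatP Th z g"
  shows "f = g"
proof
  fix x
  show "f x = g x"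
  proof (cases "x \<in> \<Union>Th")
    case True
    then obtain T where T: "T \<in> Th" "x \<in> T" by auto
    obtain u where u: "\<forall>p\<in>ext T. 0 \<le> u p" "sum u (ext T) = 1" "x = (\<Sum>p\<in>ext T. u p *\<^sub>R p)"
      using in_hull_ext[OF assms(1) T] by blast
    have "f x = (\<Sum>p\<in>ext T. u p * f p)"
      using Vh_on_T[OF assms(1) _ T u] assms(2) unfolding hatP_def by blast
    also have "\<dots> = (\<Sum>p\<in>ext T. u p * g p)"
      using assms(2,3) ext_nodes[OF T(1)] unfolding hatP_def by (intro sum.cong) auto
    also have "\<dots> = g x"
      using Vh_on_T[OF assms(1) _ T u] assms(3) unfolding hatP_def by simp
    finally show ?thesis .
  next
    case False then show ?thesis using assms(2,3) unfolding hatP_def by simp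
  qed
qed

lemma hat_exists:
  assumes "is_mesh \<Omega> Th"
  shows "\<exists>f. hatP Th z f"
proof -
  let ?d = "\<lambda>p. if p = z then 1 else (0::real)"
  have "\<forall>T\<in>Th. \<exists>a b. \<forall>p\<in>ext T. a \<bullet> p + b = ?d p"
  proof
    fix T assume "T \<in> Th"
    then have "\<not> affine_dependent (ext T)" using mesh_ext[OF assms] by blast
    then show "\<exists>a b. \<forall>p\<in>ext T. a \<bullet> p + b = ?d p" by (rule affine_interp_exists)
  qed
  then obtain A B where AB: "\<forall>T\<in>Th. \<forall>p\<in>ext T. A T \<bullet> p + B T = ?d p"
    by metis
  have agree: "A T \<bullet> x + B T = A T' \<bullet> x + B T'"
    if T: "T \<in> Th" "T' \<in> Th" "x \<in> T" "x \<in> T'" for T T' x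
  proof -
    let ?K = "T \<inter> T'"
    have fT: "?K face_of T" "?K face_of T'" using assms T(1,2) unfolding is_mesh_def by blast+
    have cT: "compact T" "convex T" using mesh_ext[OF assms T(1)] by auto
    have cK: "compact ?K" "convex ?K"
      using face_of_imp_compact[OF cT(2) cT(1) fT(1)] face_of_imp_convex[OF fT(1)] by auto
    have sub: "ext ?K \<subseteq> ext T" "ext ?K \<subseteq> ext T'"
      using extreme_point_of_face[OF fT(1)] extreme_point_of_face[OF fT(2)] by auto
    have finK: "finite (ext ?K)"
      using sub(1) mesh_ext[OF assms T(1)] finite_subset by blast
    have "x \<in> convex hull (ext ?K)" using Krein_Milman_Minkowski[OF cK] T(3,4) by simp
    then obtain u where u: "sum u (ext ?K) = 1" "x = (\<Sum>p\<in>ext ?K. u p *\<^sub>R p)"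
      using convex_hull_finite[OF finK] by auto
    have "A T \<bullet> x + B T = (\<Sum>p\<in>ext ?K. u p * (A T \<bullet> p + B T))" by (rule affcomb[OF finK u])
    also have "\<dots> = (\<Sum>p\<in>ext ?K. u p * ?d p)"
      using AB T(1) sub(1) by (intro sum.cong) auto
    also have "\<dots> = (\<Sum>p\<in>ext ?K. u p * (A T' \<bullet> p + B T'))"
      using AB T(2) sub(2) by (intro sum.cong) auto
    also have "\<dots> = A T' \<bullet> x + B T'" by (rule affcomb[OF finK u, symmetric])
    finally show ?thesis .
  qed
  define f where "f x = (if x \<in> \<Union>Th then (let T = SOME T. T \<in> Th \<and> x \<in> T in A T \<bullet> x + B T) else 0)" for x
  have fT: "f x = A T \<bullet> x + B T" if "T \<in> Th" "x \<in> T" for T x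
  proof -
    have ex: "\<exists>T. T \<in> Th \<and> x \<in> T" using that by blast
    have s: "(SOME T. T \<in> Th \<and> x \<in> T) \<in> Th \<and> x \<in> (SOME T. T \<in> Th \<and> x \<in> T)"
      using someI_ex[OF ex] .
    have "x \<in> \<Union>Th" using that by blast
    then show ?thesis unfolding f_def Let_def using agree[OF _ that(1) _ that(2)] s by simp
  qed
  have "f \<in> Vh Th" unfolding Vh_def using fT by blast
  moreover have "\<forall>z'\<in>nodes Th. f z' = ?d z'"
  proof
    fix z' assume "z' \<in> nodes Th"
    then obtain T where T: "T \<in> Th" "z' extreme_point_of T" unfolding nodes_def by auto
    then have "z' \<in> T" by (simp add: extreme_point_of_def)
    then show "f z' = ?d z'" using fT[OF T(1)] AB T by auto
  qed
  moreover have "\<forall>x. x \<notin> \<Union>Th \<longrightarrow> f x = 0" unfolding f_def by simp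
  ultimately have "hatP Th z f" unfolding hatP_def
    apply (intro conjI)
      apply assumption+
    done
  then show ?thesis by blast
qed

lemma hat_spec:
  assumes "is_mesh \<Omega> Th"
  shows "hatP Th z (hat Th z)"
proof -
  have "\<exists>!f. hatP Th z f" using hat_exists[OF assms] hat_unique[OF assms] by blast
  then have "hatP Th z (THE f. hatP Th z f)" by (rule theI')
  moreover have "hat Th z = (THE f. hatP Th z f)" unfolding hat_def hatP_def ..
  ultimately show ?thesis by simp
qed

lemma hat_nodal:
  assumes "is_mesh \<Omega> Th" "z' \<in> nodes Th"
  shows "hat Th z z' = (if z' = z then 1 else 0)"
  using hat_spec[OF assms(1), of z] assms(2) unfolding hatP_def by blast

lemma hat_pu:
  assumes "is_mesh \<Omega> Th" "x \<in> \<Union>Th"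
  shows "(\<forall>z\<in>nodes Th. 0 \<le> hat Th z x) \<and> (\<Sum>z\<in>nodes Th. hat Th z x) = 1"
proof -
  obtain T where T: "T \<in> Th" "x \<in> T" using assms(2) by auto
  obtain u where u: "\<forall>p\<in>ext T. 0 \<le> u p" "sum u (ext T) = 1" "x = (\<Sum>p\<in>ext T. u p *\<^sub>R p)"
    using in_hull_ext[OF assms(1) T] by blast
  have finN: "finite (nodes Th)" using mesh_nodes_finite[OF assms(1)] .
  have finT: "finite (ext T)" using mesh_ext[OF assms(1) T(1)] by auto
  have subN: "ext T \<subseteq> nodes Th" using ext_nodes[OF T(1)] by auto
  have hz: "hat Th z x = (\<Sum>p\<in>ext T. u p * (if p = z then 1 else 0))" for z
  proof -
    have "hat Th z x = (\<Sum>p\<in>ext T. u p * hat Th z p)"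
      using Vh_on_T[OF assms(1) _ T u] hat_spec[OF assms(1), of z] unfolding hatP_def by blast
    also have "\<dots> = (\<Sum>p\<in>ext T. u p * (if p = z then 1 else 0))"
      using hat_nodal[OF assms(1)] subN by (intro sum.cong) auto
    finally show ?thesis .
  qed
  have "0 \<le> hat Th z x" for z unfolding hz using u(1) by (intro sum_nonneg) auto
  moreover have "(\<Sum>z\<in>nodes Th. hat Th z x) = 1"
  proof -
    have "(\<Sum>z\<in>nodes Th. hat Th z x) = (\<Sum>p\<in>ext T. \<Sum>z\<in>nodes Th. u p * (if p = z then 1 else 0))"
      unfolding hz by (rule sum.swap)
    also have "\<dots> = (\<Sum>p\<in>ext T. u p)"
    proof (rule sum.cong[OF refl])
      fix p assume "p \<in> ext T"
      then have "p \<in> nodes Th" using subN by auto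
      then show "(\<Sum>z\<in>nodes Th. u p * (if p = z then 1 else 0)) = u p"
      proof -
        have "(\<Sum>z\<in>nodes Th. u p * (if p = z then 1 else 0)) = u p * (\<Sum>z\<in>nodes Th. (if p = z then 1 else 0))"
          by (rule sum_distrib_left[symmetric])
        then show ?thesis using finN \<open>p \<in> nodes Th\<close> by simp
      qed
    qed
    finally show ?thesis using u(2) by simp
  qed
  ultimately show ?thesis by simp
qed




lemma stencil_in_mesh:
  assumes mesh: "is_mesh \<Omega> Th" and eps: "0 \<le> \<epsilon>" "meshsize Th \<le> \<epsilon>"
    and z: "z \<in> int_nodes \<Omega> Th \<epsilon>" and s: "norm s = 1"
  shows "z + \<epsilon> *\<^sub>R s \<in> \<Union>Th"
proof -
  let ?F = "frontier \<Omega>"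
  let ?y = "z + \<epsilon> *\<^sub>R s"
  have zO: "z \<in> \<Omega>" and zd: "infdist z ?F > 2 * \<epsilon>"
    using z unfolding int_nodes_def inner_set_def by auto
  have dzy: "dist z ?y = \<epsilon>" using s eps by (simp add: dist_norm)
  have yO: "?y \<in> \<Omega>"
  proof (rule ccontr)
    assume "?y \<notin> \<Omega>"
    then have "closed_segment z ?y \<inter> ?F \<noteq> {}"
      using connected_Int_frontier[of "closed_segment z ?y" \<Omega>] zO by auto
    then obtain p where p: "p \<in> closed_segment z ?y" "p \<in> ?F" by blast
    have "dist p z \<le> dist z ?y" using dist_in_closed_segment[OF p(1)] by simp
    moreover have "infdist z ?F \<le> dist z p" using infdist_le[OF p(2)] .
    ultimately show False using zd dzy eps by (simp add: dist_commute)
  qed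
  have "infdist z ?F \<le> infdist ?y ?F + dist z ?y" by (rule infdist_triangle)
  then have "infdist ?y ?F > meshsize Th" using zd dzy eps by linarith
  then have "?y \<in> inner_set \<Omega> (meshsize Th)" using yO unfolding inner_set_def by auto
  then have "?y \<in> mesh_domain Th" using mesh unfolding is_mesh_def by blast
  then show ?thesis unfolding mesh_domain_def using interior_subset by blast
qed

lemma wavg:
  fixes N :: "'b set" and l g :: "'b \<Rightarrow> real" and c :: real
  assumes "finite N" "\<forall>i\<in>N. 0 \<le> l i" "sum l N = 1" "\<forall>i\<in>N. 0 < l i \<longrightarrow> g i \<le> c"
  shows "(\<Sum>i\<in>N. g i * l i) \<le> c"
    and "(\<Sum>i\<in>N. g i * l i) \<ge> c \<Longrightarrow> i \<in> N \<Longrightarrow> 0 < l i \<Longrightarrow> g i = c"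
proof -
  have nn: "\<forall>i\<in>N. 0 \<le> (c - g i) * l i"
  proof
    fix i assume i: "i \<in> N"
    show "0 \<le> (c - g i) * l i"
    proof (cases "l i = 0")
      case True then show ?thesis by simp
    next
      case False
      moreover have "0 \<le> l i" using assms(2) i by blast
      ultimately have "0 < l i" by linarith
      then have "g i \<le> c" using assms(4) i by blast
      then show ?thesis using \<open>0 < l i\<close> by (intro mult_nonneg_nonneg) auto
    qed
  qed
  have e1: "(\<Sum>i\<in>N. (c - g i) * l i) = (\<Sum>i\<in>N. c * l i) - (\<Sum>i\<in>N. g i * l i)"
    unfolding sum_subtractf[symmetric] by (rule sum.cong[OF refl]) (simp add: left_diff_distrib)
  have e2: "(\<Sum>i\<in>N. c * l i) = c * sum l N" by (rule sum_distrib_left[symmetric])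
  have eq: "(\<Sum>i\<in>N. (c - g i) * l i) = c - (\<Sum>i\<in>N. g i * l i)"
    using e1 e2 assms(3) by simp
  have s0: "0 \<le> (\<Sum>i\<in>N. (c - g i) * l i)" using nn by (simp add: sum_nonneg)
  then show "(\<Sum>i\<in>N. g i * l i) \<le> c" using eq by linarith
  assume ge: "(\<Sum>i\<in>N. g i * l i) \<ge> c" and i: "i \<in> N" "0 < l i"
  have z: "(\<Sum>j\<in>N. (c - g j) * l j) = 0" using eq s0 ge by linarith
  have all0: "\<forall>j\<in>N. (c - g j) * l j = 0"
    using sum_nonneg_eq_0_iff[OF assms(1), of "\<lambda>j. (c - g j) * l j"] nn z by blast
  then have "(c - g i) * l i = 0" using i(1) by blast
  then show "g i = c" using i(2) by simp
qed

lemma core: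
  fixes \<Omega> :: "'a::euclidean_space set"
  assumes finN: "finite (nodes Th)"
    and pu: "\<forall>x\<in>\<Union>Th. (\<forall>z\<in>nodes Th. 0 \<le> hat Th z x) \<and> (\<Sum>z\<in>nodes Th. hat Th z x) = 1"
    and nod: "\<forall>z\<in>nodes Th. \<forall>z'\<in>nodes Th. hat Th z' z = (if z' = z then 1 else 0)"
    and st: "\<forall>z\<in>int_nodes \<Omega> Th \<epsilon>. stencil \<epsilon> S z \<subseteq> \<Union>Th"
    and finS: "finite S" and eps: "0 < \<epsilon>"
    and M1: "condition_M1 \<Omega> Th \<epsilon> S"
    and h1: "\<forall>z\<in>int_nodes \<Omega> Th \<epsilon>. neg_inf_lap Th \<epsilon> S w z \<le> neg_inf_lap Th \<epsilon> S v z"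
    and h2: "\<forall>z\<in>int_nodes \<Omega> Th \<epsilon>. neg_inf_lap Th \<epsilon> S w z \<le> 0"
  shows "Max ((\<lambda>z. w z - v z) ` nodes Th) = Max ((\<lambda>z. w z - v z) ` bd_nodes \<Omega> Th \<epsilon>)"
proof -
  let ?N = "nodes Th" and ?I = "int_nodes \<Omega> Th \<epsilon>" and ?B = "bd_nodes \<Omega> Th \<epsilon>"
  let ?D = "\<lambda>z. w z - v z"
  let ?U = "interp Th w" and ?V = "interp Th v"
  have IN: "?I \<subseteq> ?N" unfolding int_nodes_def by auto
  have B: "?B = ?N - ?I" unfolding bd_nodes_def ..
  show ?thesis
  proof (cases "?I = {}")
    case True then show ?thesis using B by simp
  next
    case Ine: False
    have Bne: "?B \<noteq> {}"
    proof
      assume "?B = {}"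
      then have "?I = ?N" using B IN by auto
      then show False using M1 Ine unfolding condition_M1_def by blast
    qed
    have finB: "finite ?B" using B finN by simp
    let ?M = "Max (?D ` ?N)"
    have le: "Max (?D ` ?B) \<le> ?M" using B finN Bne by (intro Max_mono) auto
    show ?thesis
    proof (rule ccontr)
      assume "?M \<noteq> Max (?D ` ?B)"
      then have lt: "Max (?D ` ?B) < ?M" using le by simp
      have Nne: "?N \<noteq> {}" using IN Ine by auto
      define E where "E = {z\<in>?N. ?D z = ?M}"
      have "?M \<in> ?D ` ?N" using Max_in[of "?D ` ?N"] finN Nne by blast
      then obtain z0 where "z0 \<in> ?N" "?D z0 = ?M" by (metis (no_types, lifting) imageE)
      then have Ene: "E \<noteq> {}" unfolding E_def by blast
      have finE: "finite E" using finN unfolding E_def by simp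
      have EI: "E \<subseteq> ?I"
      proof
        fix z assume z: "z \<in> E"
        show "z \<in> ?I"
        proof (rule ccontr)
          assume "z \<notin> ?I"
          then have "z \<in> ?B" using z B unfolding E_def by auto
          then have "?D z \<le> Max (?D ` ?B)" using finB by simp
          then show False using z lt unfolding E_def by simp
        qed
      qed
      have DM: "\<forall>z\<in>?N. ?D z \<le> ?M" using finN by simp
      define W where "W = Max (w ` E)"
      define F where "F = {z\<in>E. w z = W}"
      have "W \<in> w ` E" using Max_in[of "w ` E"] finE Ene unfolding W_def by blast
      then obtain z1 where "z1 \<in> E" "w z1 = W" by (metis (no_types, lifting) imageE)
      then have Fne: "F \<noteq> {}" unfolding F_def by blast
      have FI: "F \<subseteq> ?I" using EI unfolding F_def by auto
      have wW: "\<forall>z\<in>E. w z \<le> W" using finE unfolding W_def by simp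
      have pu0: "\<forall>z\<in>?N. 0 \<le> hat Th z x" and pu1: "(\<Sum>z\<in>?N. hat Th z x) = 1"
        if "x \<in> \<Union>Th" for x using pu that by auto
      have interp_diff: "?U x - ?V x = (\<Sum>z\<in>?N. ?D z * hat Th z x)" for x
        unfolding interp_def by (simp add: sum_subtractf left_diff_distrib)
      have interp_node: "interp Th f z = f z" if "z \<in> ?N" for f z
      proof -
        have "interp Th f z = (\<Sum>z'\<in>?N. f z' * (if z' = z then 1 else 0))"
          unfolding interp_def using nod that by (intro sum.cong) auto
        also have "\<dots> = (\<Sum>z'\<in>?N. (if z' = z then f z' else 0))" by (intro sum.cong) auto
        also have "\<dots> = f z" using finN that by simp
        finally show ?thesis .
      qed
      have inE: "z' \<in> E" if x: "x \<in> \<Union>Th" "?U x - ?V x \<ge> ?M" "z' \<in> ?N" "0 < hat Th z' x" for x z'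
      proof -
        have "(\<Sum>z\<in>?N. ?D z * hat Th z x) \<ge> ?M" using x(2) interp_diff by simp
        note ge = this
        have "?D z' = ?M" by (rule wavg(2)[where N="?N" and l="\<lambda>z. hat Th z x" and g="?D" and c="?M", OF finN pu0[OF x(1)] pu1[OF x(1)] _ ge x(3,4)]) (use DM in auto)
        then show ?thesis using x(3) unfolding E_def by simp
      qed
      have Ule: "?U x \<le> W" if x: "x \<in> \<Union>Th" "?U x - ?V x \<ge> ?M" for x
      proof -
        have "(\<Sum>z\<in>?N. w z * hat Th z x) \<le> W"
          by (rule wavg(1)[where N="?N" and l="\<lambda>z. hat Th z x" and g="w" and c="W", OF finN pu0[OF x(1)] pu1[OF x(1)]]) (use inE[OF x] wW in auto)
        then show ?thesis unfolding interp_def .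
      qed
      have const: "?U x = w z \<and> ?V x = v z" if z: "z \<in> F" and x: "x \<in> stencil \<epsilon> S z" for z x
      proof -
        let ?P = "stencil \<epsilon> S z"
        have zI: "z \<in> ?I" using z FI by auto
        have zN: "z \<in> ?N" using zI IN by auto
        have finP: "finite ?P" using finS unfolding stencil_def by simp
        have zP: "z \<in> ?P" unfolding stencil_def by simp
        have PT: "?P \<subseteq> \<Union>Th" using st zI by blast
        have Uz: "?U z = w z" and Vz: "?V z = v z" using interp_node[OF zN] by auto
        have DzM: "?D z = ?M" using z unfolding F_def E_def by simp
        have wz: "w z = W" using z unfolding F_def by simp
        have UVle: "?U y - ?V y \<le> ?M" if "y \<in> ?P" for y
        proof -
          have "(\<Sum>z\<in>?N. ?D z * hat Th z y) \<le> ?M"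
            by (rule wavg(1)[where N="?N" and l="\<lambda>z. hat Th z y" and g="?D" and c="?M", OF finN pu0 pu1]) (use DM PT that in auto)
          then show ?thesis using interp_diff by simp
        qed
        define a1 where "a1 = Max (?U ` ?P) - ?U z"
        define a2 where "a2 = Max (?V ` ?P) - ?V z"
        define b1 where "b1 = ?U z - Min (?U ` ?P)"
        define b2 where "b2 = ?V z - Min (?V ` ?P)"
        obtain xm where xm: "xm \<in> ?P" "?U xm = Max (?U ` ?P)"
          using Max_in[of "?U ` ?P"] finP zP by fastforce
        obtain ym where ym: "ym \<in> ?P" "?V ym = Min (?V ` ?P)"
          using Min_in[of "?V ` ?P"] finP zP by fastforce
        have "?V xm \<le> Max (?V ` ?P)" using finP xm(1) by simp
        then have a12: "a1 \<le> a2" using UVle[OF xm(1)] xm(2) Uz Vz DzM unfolding a1_def a2_def by simp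
        have "Min (?U ` ?P) \<le> ?U ym" using finP ym(1) by simp
        then have b12: "b2 \<le> b1" using UVle[OF ym(1)] ym(2) Uz Vz DzM unfolding b1_def b2_def by simp
        have nl: "neg_inf_lap Th \<epsilon> S f z = - ((Max (interp Th f ` ?P) - interp Th f z) / \<epsilon>
             - (interp Th f z - Min (interp Th f ` ?P)) / \<epsilon>) / \<epsilon>" for f
          unfolding neg_inf_lap_def Splus_def Sminus_def by simp
        have "neg_inf_lap Th \<epsilon> S w z \<le> neg_inf_lap Th \<epsilon> S v z" using h1 zI by blast
        then have "- (a1 / \<epsilon> - b1 / \<epsilon>) / \<epsilon> \<le> - (a2 / \<epsilon> - b2 / \<epsilon>) / \<epsilon>"
          unfolding nl a1_def a2_def b1_def b2_def .
        then have "a2 - b2 \<le> a1 - b1" using eps by (simp add: divide_le_cancel diff_divide_distrib[symmetric])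
        then have a12e: "a1 = a2" and b12e: "b1 = b2" using a12 b12 by auto
        have "neg_inf_lap Th \<epsilon> S w z \<le> 0" using h2 zI by blast
        then have "- (a1 / \<epsilon> - b1 / \<epsilon>) / \<epsilon> \<le> 0" unfolding nl a1_def b1_def .
        then have q: "0 \<le> - (- (a1 / \<epsilon> - b1 / \<epsilon>) / \<epsilon>)" by linarith
        have ee: "0 < \<epsilon> * \<epsilon>" using eps by simp
        have "a1 - b1 = - (- (a1 / \<epsilon> - b1 / \<epsilon>) / \<epsilon>) * (\<epsilon> * \<epsilon>)" using eps by (simp add: field_simps)
        also have "\<dots> \<ge> 0" by (rule mult_nonneg_nonneg[OF q]) (use ee in linarith)
        finally have ab: "b1 \<le> a1" by simp
        have a1ge: "0 \<le> a1" using finP zP unfolding a1_def by simp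
        have b1ge: "0 \<le> b1" using finP zP unfolding b1_def by simp
        have b2ge: "0 \<le> b2" using finP zP unfolding b2_def by simp
        have "?V xm \<le> Max (?V ` ?P)" using finP xm(1) by simp
        then have "?U xm - ?V xm \<ge> ?M" using xm(2) a12e Uz Vz DzM unfolding a1_def a2_def by simp
        then have "?U xm \<le> W" using Ule PT xm(1) by blast
        then have "a1 \<le> 0" using xm(2) Uz wz unfolding a1_def by simp
        then have a0: "a1 = 0" "a2 = 0" "b1 = 0" "b2 = 0" using a1ge ab b1ge a12e b12e by auto
        have "Min (?U ` ?P) \<le> ?U x" "?U x \<le> Max (?U ` ?P)" "Min (?V ` ?P) \<le> ?V x" "?V x \<le> Max (?V ` ?P)"
          using finP x by auto
        then show ?thesis using a0 Uz Vz unfolding a1_def a2_def b1_def b2_def by simp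
      qed
      obtain z z' where zz: "z \<in> F" "z' \<in> ?N - F" "z' \<in> tilde_stencil Th \<epsilon> S z"
        using M1 Fne FI unfolding condition_M1_def by blast
      then have "z' \<noteq> z" by auto
      then obtain s where s: "s \<in> S" "0 < hat Th z' (z + \<epsilon> *\<^sub>R s)"
        using zz(3) unfolding tilde_stencil_def by auto
      let ?x = "z + \<epsilon> *\<^sub>R s"
      have xP: "?x \<in> stencil \<epsilon> S z" using s(1) unfolding stencil_def by auto
      have zI: "z \<in> ?I" using zz(1) FI by auto
      have xT: "?x \<in> \<Union>Th" using st zI xP by blast
      have cx: "?U ?x = w z" "?V ?x = v z" using const[OF zz(1) xP] by auto
      have DzM: "?D z = ?M" and wz: "w z = W" using zz(1) unfolding F_def E_def by auto
      have Mx: "?U ?x - ?V ?x \<ge> ?M" using cx DzM by simp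
      have z'E: "z' \<in> E" using inE[OF xT Mx _ s(2)] zz(2) by blast
      have "(\<Sum>z\<in>?N. w z * hat Th z ?x) \<ge> W" using cx wz unfolding interp_def by simp
      note ge = this
      have z'N: "z' \<in> ?N" using zz(2) by blast
      have "w z' = W"
        by (rule wavg(2)[where N="?N" and l="\<lambda>z. hat Th z ?x" and g="w" and c="W", OF finN pu0[OF xT] pu1[OF xT] _ ge z'N s(2)]) (use inE[OF xT Mx] wW zz(2) in auto)
      then have "z' \<in> F" using z'E unfolding F_def by simp
      then show False using zz(2) by simp
    qed
  qed
qed


lemma Max_neg_img:
  fixes g :: "'b \<Rightarrow> real"
  assumes "finite A" "A \<noteq> {}"
  shows "Max ((\<lambda>x. - g x) ` A) = - Min (g ` A)" and "Min ((\<lambda>x. - g x) ` A) = - Max (g ` A)"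
proof -
  have fin: "finite (g ` A)" "g ` A \<noteq> {}" using assms by auto
  obtain a where a: "a \<in> A" "g a = Min (g ` A)" using Min_in[OF fin] by (metis imageE)
  obtain b where b: "b \<in> A" "g b = Max (g ` A)" using Max_in[OF fin] by (metis imageE)
  show "Max ((\<lambda>x. - g x) ` A) = - Min (g ` A)"
  proof (rule Max_eqI)
    show "finite ((\<lambda>x. - g x) ` A)" using assms by simp
    show "y \<le> - Min (g ` A)" if "y \<in> (\<lambda>x. - g x) ` A" for y
      using that fin(1) by auto
    show "- Min (g ` A) \<in> (\<lambda>x. - g x) ` A" using a by (metis image_eqI)
  qed
  show "Min ((\<lambda>x. - g x) ` A) = - Max (g ` A)"
  proof (rule Min_eqI)
    show "finite ((\<lambda>x. - g x) ` A)" using assms by simp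
    show "- Max (g ` A) \<le> y" if "y \<in> (\<lambda>x. - g x) ` A" for y
      using that fin(1) by auto
    show "- Max (g ` A) \<in> (\<lambda>x. - g x) ` A" using b by (metis image_eqI)
  qed
qed

lemma neg_inf_lap_neg:
  assumes "finite S"
  shows "neg_inf_lap Th \<epsilon> S (\<lambda>x. - f x) z = - neg_inf_lap Th \<epsilon> S f z"
proof -
  have i: "interp Th (\<lambda>x. - f x) = (\<lambda>x. - interp Th f x)"
    unfolding interp_def by (simp add: sum_negf)
  have P: "finite (stencil \<epsilon> S z)" "stencil \<epsilon> S z \<noteq> {}" using assms unfolding stencil_def by auto
  have neg2: "\<And>a b::real. - a - - b = b - a" by simp
  show ?thesis
    unfolding neg_inf_lap_def Splus_def Sminus_def i Max_neg_img[OF P]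
    by (simp only: minus_divide_left minus_diff_eq neg2)
qed

theorem theorem3p3:
  fixes \<Omega> :: "'a::euclidean_space set" and Th :: "'a set set"
    and \<epsilon> \<theta> :: real and S :: "'a set" and w v :: "'a \<Rightarrow> real"
  assumes "bounded_domain_cb \<Omega>"
    and "is_mesh \<Omega> Th"
    and "meshsize Th \<le> \<epsilon>" and "\<epsilon> \<le> diameter \<Omega>"
    and "0 < \<theta>" and "\<theta> \<le> 1"
    and "sphere_net \<theta> S"
    and "condition_M1 \<Omega> Th \<epsilon> S"
    and "w \<in> Vh Th" and "v \<in> Vh Th"
    and "\<forall>z\<in>int_nodes \<Omega> Th \<epsilon>. neg_inf_lap Th \<epsilon> S w z \<le> neg_inf_lap Th \<epsilon> S v z"
    and "(\<forall>z\<in>int_nodes \<Omega> Th \<epsilon>. neg_inf_lap Th \<epsilon> S w z \<le> 0) \<or>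
         (\<forall>z\<in>int_nodes \<Omega> Th \<epsilon>. neg_inf_lap Th \<epsilon> S v z \<ge> 0)"
  shows "Max ((\<lambda>z. w z - v z) ` nodes Th) = Max ((\<lambda>z. w z - v z) ` bd_nodes \<Omega> Th \<epsilon>)"
proof -
  note mesh = assms(2)
  have finN: "finite (nodes Th)" by (rule mesh_nodes_finite[OF mesh])
  have pu: "\<forall>x\<in>\<Union>Th. (\<forall>z\<in>nodes Th. 0 \<le> hat Th z x) \<and> (\<Sum>z\<in>nodes Th. hat Th z x) = 1"
    using hat_pu[OF mesh] by blast
  have nod: "\<forall>z\<in>nodes Th. \<forall>z'\<in>nodes Th. hat Th z' z = (if z' = z then 1 else 0)"
  proof (intro ballI)
    fix z z' assume "z \<in> nodes Th" "z' \<in> nodes Th"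
    then show "hat Th z' z = (if z' = z then 1 else 0)" using hat_nodal[OF mesh, of z z'] by auto
  qed
  have finS: "finite S" and Ssph: "\<forall>s\<in>S. norm s = 1"
    using assms(7) unfolding sphere_net_def by auto
  have msz: "0 \<le> meshsize Th"
  proof -
    obtain T where T: "T \<in> Th" using mesh unfolding is_mesh_def by blast
    have "compact T" using mesh_ext[OF mesh T] by blast
    then have "0 \<le> diameter T" by (simp add: diameter_ge_0 compact_imp_bounded)
    also have "diameter T \<le> meshsize Th" unfolding meshsize_def
      using mesh T unfolding is_mesh_def by (intro Max_ge) auto
    finally show ?thesis .
  qed
  have eps0: "0 \<le> \<epsilon>" using msz assms(3) by linarith
  have st: "\<forall>z\<in>int_nodes \<Omega> Th \<epsilon>. stencil \<epsilon> S z \<subseteq> \<Union>Th"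
  proof (intro ballI subsetI)
    fix z x assume z: "z \<in> int_nodes \<Omega> Th \<epsilon>" and x: "x \<in> stencil \<epsilon> S z"
    show "x \<in> \<Union>Th"
    proof (cases "x = z")
      case True
      have "z \<in> nodes Th" using z unfolding int_nodes_def by auto
      then obtain T where "T \<in> Th" "z extreme_point_of T" unfolding nodes_def by auto
      then show ?thesis using True by (auto simp: extreme_point_of_def)
    next
      case False
      then obtain s where s: "s \<in> S" "x = z + \<epsilon> *\<^sub>R s" using x unfolding stencil_def by auto
      show ?thesis using stencil_in_mesh[OF mesh eps0 assms(3) z] Ssph s by auto
    qed
  qed
  show ?thesis
  proof (cases "\<epsilon> = 0")
    case True
    have "int_nodes \<Omega> Th \<epsilon> = {}"
    proof (rule ccontr)
      assume "int_nodes \<Omega> Th \<epsilon> \<noteq> {}"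
      then obtain z where z: "z \<in> int_nodes \<Omega> Th \<epsilon>" by blast
      then have zN: "z \<in> nodes Th" unfolding int_nodes_def by auto
      have "\<exists>za\<in>{z}. \<exists>z'\<in>nodes Th - {z}. z' \<in> tilde_stencil Th \<epsilon> S za"
        using assms(8)[unfolded condition_M1_def, rule_format, of "{z}"] z by blast
      then obtain z' where z': "z' \<in> nodes Th - {z}" "z' \<in> tilde_stencil Th \<epsilon> S z" by blast
      then have "hat Th z' z > 0" using True unfolding tilde_stencil_def by auto
      moreover have "hat Th z' z = 0" using nod zN z'(1) by auto
      ultimately show False by simp
    qed
    then show ?thesis unfolding bd_nodes_def by simp
  next
    case False
    then have eps: "0 < \<epsilon>" using eps0 by simp
    show ?thesis
    proof (cases "\<forall>z\<in>int_nodes \<Omega> Th \<epsilon>. neg_inf_lap Th \<epsilon> S w z \<le> 0")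
      case True
      show ?thesis by (rule core[OF finN pu nod st finS eps assms(8) assms(11) True])
    next
      case False
      then have h2: "\<forall>z\<in>int_nodes \<Omega> Th \<epsilon>. neg_inf_lap Th \<epsilon> S v z \<ge> 0" using assms(12) by blast
      have h1': "\<forall>z\<in>int_nodes \<Omega> Th \<epsilon>. neg_inf_lap Th \<epsilon> S (\<lambda>x. - v x) z \<le> neg_inf_lap Th \<epsilon> S (\<lambda>x. - w x) z"
        using assms(11) neg_inf_lap_neg[OF finS] by simp
      have h2': "\<forall>z\<in>int_nodes \<Omega> Th \<epsilon>. neg_inf_lap Th \<epsilon> S (\<lambda>x. - v x) z \<le> 0"
        using h2 neg_inf_lap_neg[OF finS] by simp
      have "Max ((\<lambda>z. - v z - - w z) ` nodes Th) = Max ((\<lambda>z. - v z - - w z) ` bd_nodes \<Omega> Th \<epsilon>)"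
        by (rule core[OF finN pu nod st finS eps assms(8) h1' h2'])
      moreover have "(\<lambda>z. - v z - - w z) = (\<lambda>z. w z - v z)" by auto
      ultimately show ?thesis by simp
    qed
  qed
qed

end
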